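(* There exist a topologically regular compact set $K\subseteq\mathbb{R}^2$ and a function $F\in C^1_{\mathrm{int}}(K)$ such that $F\notin C^1(K)$. More precisely, there is a rectifiable path $\gamma:[0,1]\to K$ with $\int_\gamma dF=0$ while $F(\gamma(1))-F(\gamma(0))=1$, where $dF$ denotes the continuous extension to $K$ of the derivative of $F$ on the interior of $K$.
   Context: A compact set $K$ is topologically regular if it is the closure of its interior $\mathring K$. $C^1_{\mathrm{int}}(K)$ is the set of functions $f\in C^1(\mathring K)$ (classical continuously differentiable functions on the open set $\mathring K$) such that $f$ and its derivative $df$ extend continuously to $K$. $C^1(K)$ is the set of $f:K\to\mathbb{R}$ admitting a continuous $df:K\to\mathbb{R}^2$ with $\lim_{y\to x,\,y\in K\setminus\{x\}}\frac{f(y)-f(x)-\langle df(x),y-x\rangle}{|y-x|}=0$ for all $x\in K$. Rectifiable paths (continuous maps of finite length) and path integrals $\int_\gamma F$ (limits of Riemann–Stieltjes sums $\sum_j\langle F(\gamma(\tau_j)),\gamma(t_j)-\gamma(t_{j-1})\rangle$) are as usual. *)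

theory Defs
  imports "HOL-Analysis.Analysis"
begin

definition top_regular :: "(real^2) set \<Rightarrow> bool" where
  "top_regular K \<longleftrightarrow> closure (interior K) = K"

text \<open>C^1_int(K): F is differentiable on the interior of K with derivative
  given by the gradient field dF there, and F and dF are continuous on K
  (so they are the continuous extensions to K).\<close>
definition C1_int :: "(real^2) set \<Rightarrow> (real^2 \<Rightarrow> real) \<Rightarrow> (real^2 \<Rightarrow> real^2) \<Rightarrow> bool" where
  "C1_int K F dF \<longleftrightarrow>
     (\<forall>x\<in>interior K. (F has_derivative (\<lambda>h. dF x \<bullet> h)) (at x)) \<and>
     continuous_on K F \<and> continuous_on K dF"

definition C1_on :: "(real^2) set \<Rightarrow> (real^2 \<Rightarrow> real) \<Rightarrow> bool" where
  "C1_on K F \<longleftrightarrow> (\<exists>dF :: real^2 \<Rightarrow> real^2. continuous_on K dF \<and>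
     (\<forall>x\<in>K. ((\<lambda>y. (F y - F x - dF x \<bullet> (y - x)) / norm (y - x)) \<longlongrightarrow> 0) (at x within K)))"

definition partition01 :: "nat \<Rightarrow> (nat \<Rightarrow> real) \<Rightarrow> bool" where
  "partition01 n t \<longleftrightarrow> n \<ge> 1 \<and> t 0 = 0 \<and> t n = 1 \<and> (\<forall>j<n. t j < t (Suc j))"

definition tags_ok :: "nat \<Rightarrow> (nat \<Rightarrow> real) \<Rightarrow> (nat \<Rightarrow> real) \<Rightarrow> bool" where
  "tags_ok n t tau \<longleftrightarrow> (\<forall>j\<in>{1..n}. t (j - 1) \<le> tau j \<and> tau j \<le> t j)"

definition mesh :: "nat \<Rightarrow> (nat \<Rightarrow> real) \<Rightarrow> real" where
  "mesh n t = Max ((\<lambda>j. t j - t (j - 1)) ` {1..n})"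

definition rectifiable_path :: "(real \<Rightarrow> real^2) \<Rightarrow> bool" where
  "rectifiable_path g \<longleftrightarrow> continuous_on {0..1} g \<and>
     bdd_above {(\<Sum>j=1..n. norm (g (t j) - g (t (j - 1)))) | n t. partition01 n t}"

definition has_path_integral :: "(real^2 \<Rightarrow> real^2) \<Rightarrow> (real \<Rightarrow> real^2) \<Rightarrow> real \<Rightarrow> bool" where
  "has_path_integral G g I \<longleftrightarrow>
     (\<forall>e>0. \<exists>d>0. \<forall>n t tau. partition01 n t \<and> tags_ok n t tau \<and> mesh n t < d \<longrightarrow>
        \<bar>(\<Sum>j=1..n. G (g (tau j)) \<bullet> (g (t j) - g (t (j - 1)))) - I\<bar> < e)"

end

theory Submission
  imports Defs
begin

definition rr :: "nat \<Rightarrow> real" where "rr n = from_nat_into \<rat> n"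
definition VV :: "real set" where "VV = (\<Union>n. ball (rr n) ((1/8)*(1/2)^n))"
definition CC :: "real set" where "CC = {0..1} - VV"
definition MM :: "real \<Rightarrow> real" where "MM x = measure lebesgue (CC \<inter> {0..x})"

lemma open_VV: "open VV" unfolding VV_def by auto
lemma closed_CC: "closed CC" unfolding CC_def using open_VV by (simp add: closed_Diff)
lemma CC_sub: "CC \<subseteq> {0..1}" unfolding CC_def by auto
lemma compact_CC: "compact CC"
  using closed_CC CC_sub by (meson bounded_closed_interval bounded_subset compact_eq_bounded_closed)

lemma Rats_VV: "q \<in> \<rat> \<Longrightarrow> q \<in> VV"
proof -
  assume "q \<in> \<rat>"
  then obtain n where "q = rr n" unfolding rr_def
    using range_from_nat_into[of \<rat>] countable_rat Rats_0 by (metis empty_iff rangeE)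
  then show "q \<in> VV" unfolding VV_def by (intro UN_I[of n]) auto
qed

lemma geo_le: "(\<Sum>i\<le>n. (1/4)*(1/2::real)^i) \<le> 1/2"
proof -
  have "(\<Sum>i\<le>n. (1/4)*(1/2::real)^i) = 1/2 - (1/4)*(1/2)^n"
    by (induction n) (auto simp: field_simps)
  then show ?thesis by simp
qed

lemma VV_meas: "VV \<in> lmeasurable" "measure lebesgue VV \<le> 1/2"
proof -
  let ?S = "\<lambda>n. ball (rr n) ((1/8)*(1/2::real)^n)"
  have S: "\<And>i. ?S i \<in> fmeasurable lebesgue" by auto
  have B: "measure lebesgue (\<Union>i\<le>n. ?S i) \<le> 1/2" for n
  proof -
    have "measure lebesgue (\<Union>i\<le>n. ?S i) \<le> (\<Sum>i\<le>n. measure lebesgue (?S i))"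
      by (rule measure_UNION_le) auto
    also have "\<dots> = (\<Sum>i\<le>n. (1/4)*(1/2::real)^i)"
      by (intro sum.cong refl) (simp add: ball_eq_greaterThanLessThan)
    also have "\<dots> \<le> 1/2" by (rule geo_le)
    finally show ?thesis .
  qed
  show "VV \<in> lmeasurable" unfolding VV_def by (rule fmeasurable_countable_Union[OF S B])
  show "measure lebesgue VV \<le> 1/2" unfolding VV_def by (rule measure_countable_Union_le[OF S B])
qed

lemma CC_meas: "measure lebesgue CC \<ge> 1/2"
proof -
  have CCm: "CC \<in> lmeasurable" using compact_CC lmeasurable_compact by blast
  have "1 = measure lebesgue {0..1::real}" by simp
  also have "\<dots> \<le> measure lebesgue (CC \<union> VV)"
    by (rule measure_mono_fmeasurable) (auto simp: CC_def intro: fmeasurable.Un CCm VV_meas)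
  also have "\<dots> \<le> measure lebesgue CC + measure lebesgue VV"
    by (rule measure_Un_le) (use CCm VV_meas in auto)
  finally show ?thesis using VV_meas by linarith
qed

lemma CC_ne: "CC \<noteq> {}" using CC_meas by auto

lemma MM_mono_lip:
  assumes "a \<le> b" shows "MM a \<le> MM b" "MM b \<le> MM a + (b - a)"
proof -
  have m: "CC \<inter> {0..x} \<in> lmeasurable" for x
    by (intro lmeasurable_compact compact_Int_closed compact_CC) auto
  show "MM a \<le> MM b" unfolding MM_def
    by (rule measure_mono_fmeasurable) (use assms m in auto)
  have "MM b \<le> measure lebesgue ((CC \<inter> {0..a}) \<union> {a..b})" unfolding MM_def
    by (rule measure_mono_fmeasurable) (use assms m in auto)
  also have "\<dots> \<le> MM a + measure lebesgue {a..b}" unfolding MM_def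
    by (rule measure_Un_le) (use m in auto)
  finally show "MM b \<le> MM a + (b - a)" using assms by simp
qed

lemma MM_lip: "\<bar>MM x - MM y\<bar> \<le> \<bar>x - y\<bar>"
  using MM_mono_lip[of x y] MM_mono_lip[of y x] by (cases "x \<le> y") auto

lemma MM_cont: "continuous_on UNIV MM"
  by (rule lipschitz_on_continuous_on[of 1]) (auto intro!: lipschitz_onI simp: dist_real_def MM_lip)

lemma MM_loc_const:
  assumes "x \<notin> CC" shows "\<exists>e>0. \<forall>y. dist y x < e \<longrightarrow> MM y = MM x"
proof -
  have "open (- CC)" using closed_CC by auto
  moreover have "x \<in> - CC" using assms by simp
  ultimately obtain e where e: "e > 0" "ball x e \<subseteq> - CC" by (meson open_contains_ball)
  have "MM y = MM x" if "dist y x < e" for y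
  proof -
    have "CC \<inter> {0..y} = CC \<inter> {0..x}"
    proof (intro set_eqI iffI)
      fix z assume z: "z \<in> CC \<inter> {0..y}"
      show "z \<in> CC \<inter> {0..x}"
      proof (rule ccontr)
        assume "z \<notin> CC \<inter> {0..x}"
        then have "x < z" "z \<le> y" using z by (auto simp: not_le)
        then have "z \<in> ball x e" using that unfolding mem_ball dist_real_def by linarith
        then show False using e z by blast
      qed
    next
      fix z assume z: "z \<in> CC \<inter> {0..x}"
      show "z \<in> CC \<inter> {0..y}"
      proof (rule ccontr)
        assume "z \<notin> CC \<inter> {0..y}"
        then have "y < z" "z \<le> x" using z by (auto simp: not_le)
        then have "z \<in> ball x e" using that unfolding mem_ball dist_real_def by linarith
        then show False using e z by blast
      qed
    qed
    then show ?thesis unfolding MM_def by simp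
  qed
  then show ?thesis using e(1) by blast
qed

lemma MM_0: "MM 0 = 0"
proof -
  have "negligible (CC \<inter> {0..0})" by (rule negligible_subset[OF negligible_sing[of 0]]) auto
  then show ?thesis unfolding MM_def using negligible_imp_measure0 by blast
qed

lemma MM_1: "MM 1 \<ge> 1/2"
proof -
  have "CC \<inter> {0..1} = CC" using CC_sub by auto
  then show ?thesis unfolding MM_def using CC_meas by simp
qed

lemma dense_notCC:
  assumes "0 \<le> s" "s \<le> 1" "e > 0"
  shows "\<exists>q. q \<notin> CC \<and> 0 < q \<and> q < 1 \<and> \<bar>q - s\<bar> < e"
proof -
  have "max 0 (s - e) < min 1 (s + e)" using assms by auto
  then obtain q where q: "q \<in> \<rat>" "max 0 (s - e) < q" "q < min 1 (s + e)"
    using Rats_dense_in_real by blast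
  then have "q \<notin> CC" unfolding CC_def using Rats_VV by auto
  then show ?thesis using q by (intro exI[of _ q]) auto
qed


definition ff :: "real \<Rightarrow> real" where "ff x = MM x / MM 1"
definition hh :: "real \<Rightarrow> real" where "hh s = infdist s CC"
definition TT :: "(real^2) set" where
  "TT = {p. 0 < p$1 \<and> p$1 < 1 \<and> 0 < p$2 \<and> p$2 < hh (p$1)}"
definition FF :: "real^2 \<Rightarrow> real" where "FF p = ff (p$1)"
definition gg :: "real \<Rightarrow> real^2" where "gg s = s *\<^sub>R axis 1 1"

lemma ff_cont: "continuous_on UNIV ff"
  unfolding ff_def by (intro continuous_intros MM_cont) (use MM_1 in auto)

lemma ff_loc_const: "x \<notin> CC \<Longrightarrow> \<exists>e>0. \<forall>y. dist y x < e \<longrightarrow> ff y = ff x"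
  unfolding ff_def using MM_loc_const by metis

lemma ff_01: "ff 1 - ff 0 = 1"
  unfolding ff_def using MM_0 MM_1 by simp

lemma hh_pos_iff: "hh s > 0 \<longleftrightarrow> s \<notin> CC"
  unfolding hh_def using infdist_pos_not_in_closed[OF closed_CC CC_ne] in_closed_iff_infdist_zero[OF closed_CC CC_ne]
  by force

lemma hh_cont: "continuous_on UNIV hh"
  unfolding hh_def by (intro continuous_intros)

lemma open_TT: "open TT"
proof -
  have c: "continuous_on UNIV (\<lambda>p::real^2. hh (p$1))"
    by (rule continuous_on_compose2[OF hh_cont]) (auto intro: continuous_intros)
  have eq: "TT = {p. 0 < p$1} \<inter> {p. p$1 < 1} \<inter> {p. 0 < p$2} \<inter> {p. p$2 < hh (p$1)}"
    unfolding TT_def by auto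
  have "open {p::real^2. 0 < p$1}" "open {p::real^2. p$1 < 1}" "open {p::real^2. 0 < p$2}"
    by (intro open_Collect_less continuous_intros)+
  moreover have "open {p::real^2. p$2 < hh (p$1)}"
    by (intro open_Collect_less continuous_intros c)
  ultimately show ?thesis unfolding eq by (intro open_Int)
qed

lemma KK_sub: "closure TT \<subseteq> {p. 0 \<le> p$2 \<and> p$2 \<le> hh (p$1)}"
proof (rule closure_minimal)
  show "TT \<subseteq> {p. 0 \<le> p$2 \<and> p$2 \<le> hh (p$1)}" unfolding TT_def by auto
  have c: "continuous_on UNIV (\<lambda>p::real^2. hh (p$1))"
    by (rule continuous_on_compose2[OF hh_cont]) (auto intro: continuous_intros)
  have "{p::real^2. 0 \<le> p$2 \<and> p$2 \<le> hh (p$1)} = {p. 0 \<le> p$2} \<inter> {p. p$2 \<le> hh (p$1)}" by auto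
  moreover have "closed {p::real^2. 0 \<le> p$2}" by (intro closed_Collect_le continuous_intros)
  moreover have "closed {p::real^2. p$2 \<le> hh (p$1)}" by (intro closed_Collect_le continuous_intros c)
  ultimately show "closed {p::real^2. 0 \<le> p$2 \<and> p$2 \<le> hh (p$1)}" by auto
qed

lemma interior_KK: assumes "p \<in> interior (closure TT)" shows "p$1 \<notin> CC"
proof -
  have "open (interior (closure TT))" by simp
  then obtain e where e0: "e > 0" "ball p e \<subseteq> interior (closure TT)"
    using assms open_contains_ball by blast
  then have e: "e > 0" "ball p e \<subseteq> closure TT" using interior_subset by blast+
  let ?q = "p - (e/2) *\<^sub>R axis 2 1"
  have "dist p ?q = e/2" using e by (simp add: dist_norm norm_axis_1)
  then have "?q \<in> ball p e" using e by simp
  then have "?q \<in> closure TT" using e by blast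
  then have "0 \<le> ?q$2" "?q$2 \<le> hh (?q$1)" using KK_sub by auto
  moreover have "?q$2 = p$2 - e/2" "?q$1 = p$1" by (simp_all add: axis_def)
  moreover have "p \<in> closure TT" using assms interior_subset by blast
  then have "p$2 \<le> hh (p$1)" using KK_sub by auto
  ultimately have "hh (p$1) > 0" using e by linarith
  then show ?thesis using hh_pos_iff by blast
qed

lemma FF_deriv: assumes "p \<in> interior (closure TT)" shows "(FF has_derivative (\<lambda>h. 0)) (at p)"
proof -
  obtain e where e: "e > 0" "\<forall>y. dist y (p$1) < e \<longrightarrow> ff y = ff (p$1)"
    using ff_loc_const[OF interior_KK[OF assms]] by blast
  show ?thesis
  proof (rule has_derivative_transform_within_open[of "\<lambda>_. ff (p$1)" _ p UNIV "ball p e"])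
    show "((\<lambda>_. ff (p$1)) has_derivative (\<lambda>h. 0)) (at p)" by simp
    show "open (ball p e)" by simp
    show "p \<in> ball p e" using e by simp
    fix q assume "q \<in> ball p e"
    moreover have "dist (q$1) (p$1) \<le> dist q p" by (rule dist_vec_nth_le)
    ultimately have "dist (q$1) (p$1) < e" by (metis dist_commute mem_ball order_le_less_trans)
    then show "ff (p$1) = FF q" unfolding FF_def using e(2) by metis
  qed
qed

lemma gg_comp: "gg s $ 1 = s" "gg s $ 2 = 0" "norm (gg a - gg b) = \<bar>a - b\<bar>"
proof -
  show "gg s $ 1 = s" "gg s $ 2 = 0" by (simp_all add: gg_def axis_def)
  have "gg a - gg b = (a - b) *\<^sub>R axis 1 1" by (simp add: gg_def scaleR_diff_left)
  then show "norm (gg a - gg b) = \<bar>a - b\<bar>" by (simp add: norm_axis_1)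
qed

lemma gg_in: assumes "0 \<le> s" "s \<le> 1" shows "gg s \<in> closure TT"
proof (unfold closure_approachable, intro allI impI)
  fix e :: real assume e: "e > 0"
  obtain q where q: "q \<notin> CC" "0 < q" "q < 1" "\<bar>q - s\<bar> < e/2"
    using dense_notCC[OF assms, of "e/2"] e by auto
  define t where "t = min (hh q / 2) (e/4)"
  have hq: "hh q > 0" using q hh_pos_iff by blast
  have t: "0 < t" "t < hh q" "t < e/2" using hq e by (auto simp: t_def)
  define y :: "real^2" where "y = q *\<^sub>R axis 1 1 + t *\<^sub>R axis 2 1"
  have y1: "y$1 = q" and y2: "y$2 = t" by (simp_all add: y_def axis_def)
  have "y \<in> TT" unfolding TT_def using y1 y2 q t by auto
  moreover have "dist y (gg s) < e"
  proof -
    have "y - gg s = (q - s) *\<^sub>R axis 1 1 + t *\<^sub>R axis 2 1"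
      by (simp add: y_def gg_def algebra_simps)
    then have "norm (y - gg s) \<le> \<bar>q - s\<bar> + \<bar>t\<bar>"
      by (metis norm_triangle_ineq norm_scaleR norm_axis_1 mult.right_neutral)
    then show ?thesis using q t by (simp add: dist_norm)
  qed
  ultimately show "\<exists>y\<in>TT. dist y (gg s) < e" by blast
qed

lemma bounded_TT: "bounded TT"
proof -
  obtain c where c: "c \<in> CC" using CC_ne by blast
  have "TT \<subseteq> cbox 0 (\<chi> i. 1)"
  proof
    fix p assume p: "p \<in> TT"
    have "hh (p$1) \<le> dist (p$1) c" unfolding hh_def using c by (rule infdist_le)
    also have "\<dots> \<le> 1"
    proof -
      have "0 \<le> c" "c \<le> 1" using c CC_sub by auto
      then show ?thesis using p unfolding TT_def dist_real_def by auto
    qed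
    finally show "p \<in> cbox 0 (\<chi> i. 1)" using p unfolding TT_def
      by (auto simp: mem_box_cart forall_2)
  qed
  then show ?thesis using bounded_cbox bounded_subset by blast
qed

lemma telescope: "(\<Sum>j=1..(n::nat). (t j - t (j - 1))::real) = t n - t 0"
  by (induction n) (auto simp: sum.cl_ivl_Suc)


lemma rect_gg: "rectifiable_path gg"
  unfolding rectifiable_path_def
proof
  show "continuous_on {0..1} gg" unfolding gg_def by (intro continuous_intros)
  show "bdd_above {(\<Sum>j=1..n. norm (gg (t j) - gg (t (j - 1)))) | n t. partition01 n t}"
  proof (rule bdd_aboveI[where M=1])
    fix x assume "x \<in> {(\<Sum>j=1..n. norm (gg (t j) - gg (t (j - 1)))) | n t. partition01 n t}"
    then obtain n t where x: "x = (\<Sum>j=1..n. norm (gg (t j) - gg (t (j - 1))))" and p: "partition01 n t"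
      by blast
    have "x = (\<Sum>j=1..n. (t j - t (j - 1)))"
      unfolding x
    proof (intro sum.cong refl)
      fix j assume j: "j \<in> {1..n}"
      then have "j - 1 < n" "Suc (j - 1) = j" by auto
      then have "t (j - 1) < t j" using p unfolding partition01_def by metis
      then show "norm (gg (t j) - gg (t (j - 1))) = t j - t (j - 1)" by (simp add: gg_comp)
    qed
    also have "\<dots> = 1" using p unfolding telescope partition01_def by simp
    finally show "x \<le> 1" by simp
  qed
qed

lemma pint_gg: "has_path_integral (\<lambda>_. 0) gg 0"
  unfolding has_path_integral_def by (auto intro: exI[of _ 1])

theorem mainTheorem4:
  shows "\<exists>(K :: (real^2) set) (F :: real^2 \<Rightarrow> real) (dF :: real^2 \<Rightarrow> real^2).
           compact K \<and> top_regular K \<and> C1_int K F dF \<and> \<not> C1_on K F \<and>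
           (\<exists>g :: real \<Rightarrow> real^2. rectifiable_path g \<and> g ` {0..1} \<subseteq> K \<and>
              has_path_integral dF g 0 \<and> F (g 1) - F (g 0) = 1)"
proof -
  let ?K = "closure TT"
  have cK: "compact ?K" using bounded_TT compact_closure by blast
  have tr: "top_regular ?K" unfolding top_regular_def
  proof
    show "closure (interior ?K) \<subseteq> ?K" by (metis closure_closure closure_mono interior_subset)
    have "TT \<subseteq> interior ?K" using open_TT by (simp add: interior_maximal closure_subset)
    then show "?K \<subseteq> closure (interior ?K)" by (rule closure_mono)
  qed
  have c1: "C1_int ?K FF (\<lambda>_. 0)" unfolding C1_int_def
  proof (intro conjI ballI)
    fix x assume "x \<in> interior ?K"
    then show "(FF has_derivative (\<lambda>h. (0::real^2) \<bullet> h)) (at x)" using FF_deriv by simp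
  next
    have "continuous_on UNIV (\<lambda>p::real^2. ff (p$1))"
      by (rule continuous_on_compose2[OF ff_cont]) (auto intro: continuous_intros)
    then show "continuous_on ?K FF" unfolding FF_def
      by (rule continuous_on_subset) simp
  qed simp
  have nc: "\<not> C1_on ?K FF"
  proof
    assume "C1_on ?K FF"
    then obtain D where D: "continuous_on ?K D" and
      W: "\<forall>x\<in>?K. ((\<lambda>y. (FF y - FF x - D x \<bullet> (y - x)) / norm (y - x)) \<longlongrightarrow> 0) (at x within ?K)"
      unfolding C1_on_def by blast
    have D0i: "D p = 0" if p: "p \<in> interior ?K" for p
    proof -
      have pK: "p \<in> ?K" using p interior_subset by blast
      have "((\<lambda>y. (FF y - FF p - D p \<bullet> (y - p)) / norm (y - p)) \<longlongrightarrow> 0) (at p within ?K)"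
        using W pK by blast
      then have "((\<lambda>y. (FF y - FF p - D p \<bullet> (y - p)) / norm (y - p)) \<longlongrightarrow> 0) (at p)"
        unfolding at_within_interior[OF p] .
      then have "(FF has_derivative (\<lambda>h. D p \<bullet> h)) (at p)"
        by (simp add: has_derivative_at_within bounded_linear_inner_right divide_inverse_commute)
      moreover have "(FF has_derivative (\<lambda>h. 0)) (at p)" using FF_deriv p by blast
      ultimately have "(\<lambda>h. D p \<bullet> h) = (\<lambda>h. 0)" by (rule has_derivative_unique)
      from fun_cong[OF this, of "D p"] have "D p \<bullet> D p = 0" by simp
      then show ?thesis by simp
    qed
    have D0: "D x = 0" if "x \<in> ?K" for x
    proof -
      have "closure (interior ?K) = ?K" using tr unfolding top_regular_def by blast
      show ?thesis
      proof (rule continuous_constant_on_closure[of "interior ?K" D 0 x])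
        show "continuous_on (closure (interior ?K)) D" using D \<open>closure (interior ?K) = ?K\<close> by simp
        show "\<And>x. x \<in> interior ?K \<Longrightarrow> D x = 0" using D0i by blast
        show "x \<in> closure (interior ?K)" using that \<open>closure (interior ?K) = ?K\<close> by simp
      qed
    qed
    have HD: "(ff has_field_derivative 0) (at s within {0..1})" if s: "s \<in> {0..1}" for s
    proof -
      have gK: "gg s \<in> ?K" using gg_in s by auto
      have L: "((\<lambda>y. (FF y - FF (gg s)) / norm (y - gg s)) \<longlongrightarrow> 0) (at (gg s) within ?K)"
      proof -
        have "((\<lambda>y. (FF y - FF (gg s) - D (gg s) \<bullet> (y - gg s)) / norm (y - gg s)) \<longlongrightarrow> 0) (at (gg s) within ?K)"
          using W gK by blast
        then show ?thesis unfolding D0[OF gK] inner_zero_left diff_zero .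
      qed
      have G: "filterlim gg (at (gg s) within ?K) (at s within {0..1})"
        unfolding filterlim_at
      proof
        have "\<forall>\<^sub>F x in at s within {0..1}. gg x \<in> ?K \<and> gg x \<noteq> gg s"
          unfolding eventually_at_filter
        proof (rule always_eventually, intro allI impI)
          fix x assume "x \<noteq> s" "x \<in> {0..1::real}"
          then have "gg x \<in> ?K" using gg_in by simp
          moreover have "gg x \<noteq> gg s" using \<open>x \<noteq> s\<close> gg_comp(1)[of x] gg_comp(1)[of s] by force
          ultimately show "gg x \<in> ?K \<and> gg x \<noteq> gg s" by blast
        qed
        then show "\<forall>\<^sub>F x in at s within {0..1}. gg x \<in> ?K \<and> gg x \<noteq> gg s" .
        show "(gg \<longlongrightarrow> gg s) (at s within {0..1})" unfolding gg_def by (intro tendsto_intros)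
      qed
      have T1: "((\<lambda>t. (FF (gg t) - FF (gg s)) / norm (gg t - gg s)) \<longlongrightarrow> 0) (at s within {0..1})"
        by (rule filterlim_compose[OF L G])
      have eq: "\<And>t. FF (gg t) = ff t" by (simp add: FF_def gg_comp)
      have T2: "((\<lambda>t. (ff t - ff s) / \<bar>t - s\<bar>) \<longlongrightarrow> 0) (at s within {0..1})"
        using T1 unfolding eq gg_comp(3) .
      have T3: "((\<lambda>t. \<bar>(ff t - ff s) / \<bar>t - s\<bar>\<bar>) \<longlongrightarrow> 0) (at s within {0..1})"
        using T2 by (rule tendsto_rabs_zero)
      have eq2: "\<And>t. \<bar>(ff t - ff s) / \<bar>t - s\<bar>\<bar> = \<bar>(ff t - ff s) / (t - s)\<bar>"
        by (simp add: abs_divide)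
      have T4: "((\<lambda>t. (ff t - ff s) / (t - s)) \<longlongrightarrow> 0) (at s within {0..1})"
        using T3 unfolding eq2 by (rule tendsto_rabs_zero_cancel)
      show ?thesis unfolding has_field_derivative_iff using T4 .
    qed
    have cv: "convex {0..1::real}" by simp
    obtain c where c: "\<forall>x\<in>{0..1}. ff x = c"
      using has_field_derivative_zero_constant[OF cv HD] by blast
    have "ff 1 = c" "ff 0 = c" using c by auto
    then show False using ff_01 by simp
  qed
  have gK: "gg ` {0..1} \<subseteq> ?K" using gg_in by auto
  have gd: "FF (gg 1) - FF (gg 0) = 1" by (simp add: FF_def gg_comp ff_01)
  show ?thesis
    by (intro exI[of _ ?K] exI[of _ FF] exI[of _ "\<lambda>_. 0"] conjI cK tr c1 nc exI[of _ gg]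
          rect_gg gK pint_gg gd)
qed

end
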